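(* Let $a_0,a_1,a_2,a_3\in\mathbb{R}$ and for real $\lambda$ let $$\mathbf{M}_\lambda=\begin{bmatrix}1&\frac{a_3}{2}&\frac{a_2-\lambda}{2}\\[2pt] \frac{a_3}{2}&\lambda&\frac{a_1}{2}\\[2pt] \frac{a_2-\lambda}{2}&\frac{a_1}{2}&a_0\end{bmatrix}.$$ If $\lambda_i\in\mathbb{R}$ is such that the conic $\mathbf{M}_{\lambda_i}$ is a degenerate conic consisting of a complex conjugate line-pair, then $\operatorname{rank}\mathbf{M}_{\lambda_i}=2$ and $\lambda_i\ge \frac{a_3^2}{4}$.
   Context: A real symmetric $3\times3$ matrix $\mathbf{M}$ defines the conic $\{[u:v:w]\in\mathbb{P}^2(\mathbb{C}) : (u,v,w)\mathbf{M}(u,v,w)^T=0\}$. The conic "consists of a complex conjugate line-pair" if the quadratic form $(u,v,w)\mathbf{M}(u,v,w)^T$ factors as $\ell\,\bar\ell$ where $\ell$ is a linear form with complex coefficients not proportional to any real linear form and $\bar\ell$ is its complex conjugate. *)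

theory Defs
  imports "HOL-Analysis.Analysis"
begin

definition Mlam :: "real \<Rightarrow> real \<Rightarrow> real \<Rightarrow> real \<Rightarrow> real \<Rightarrow> real^3^3" where
  "Mlam a0 a1 a2 a3 lam =
     vector [vector [1, a3/2, (a2 - lam)/2],
             vector [a3/2, lam, a1/2],
             vector [(a2 - lam)/2, a1/2, a0]]"

definition cquad :: "real^3^3 \<Rightarrow> complex^3 \<Rightarrow> complex" where
  "cquad M x = (\<Sum>i\<in>UNIV. \<Sum>j\<in>UNIV. of_real (M$i$j) * x$i * x$j)"

definition lform :: "complex^3 \<Rightarrow> complex^3 \<Rightarrow> complex" where
  "lform l x = (\<Sum>i\<in>UNIV. l$i * x$i)"

text \<open>The conic consists of a complex conjugate line-pair: the quadratic form factors
  as l * conj(l) with l not proportional to any real linear form.\<close>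
definition cc_line_pair :: "real^3^3 \<Rightarrow> bool" where
  "cc_line_pair M \<longleftrightarrow>
     (\<exists>l::complex^3.
        \<not> (\<exists>(c::complex) (r::real^3). \<forall>i. l$i = c * of_real (r$i)) \<and>
        (\<forall>x. cquad M x = lform l x * lform (\<chi> i. cnj (l$i)) x))"

end

theory Submission
  imports Defs
begin

lemma entries:
  fixes l :: "complex^3"
  assumes eq: "\<forall>x. cquad (Mlam a0 a1 a2 a3 lam) x = lform l x * lform (\<chi> i. cnj (l$i)) x"
  defines "p1 \<equiv> Re (l$1)" and "q1 \<equiv> Im (l$1)" and "p2 \<equiv> Re (l$2)" and "q2 \<equiv> Im (l$2)"
    and "p3 \<equiv> Re (l$3)" and "q3 \<equiv> Im (l$3)"
  shows "1 = p1*p1 + q1*q1" "lam = p2*p2+q2*q2" "a0 = p3*p3+q3*q3"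
    "a3/2 = p1*p2+q1*q2" "(a2-lam)/2 = p1*p3+q1*q3" "a1/2 = p2*p3+q2*q3"
proof -
  let ?M = "Mlam a0 a1 a2 a3 lam"
  have E: "\<And>x. cquad ?M x = lform l x * lform (\<chi> i. cnj (l$i)) x" using eq by blast
  note S = cquad_def lform_def sum_3 vector_def complex_eq_iff Mlam_def
  have e1: "1 = p1*p1 + q1*q1" using E[of "vector [1,0,0]"] by (simp add: S p1_def q1_def)
  have e2: "lam = p2*p2 + q2*q2" using E[of "vector [0,1,0]"] by (simp add: S p2_def q2_def)
  have e3: "a0 = p3*p3 + q3*q3" using E[of "vector [0,0,1]"] by (simp add: S p3_def q3_def)
  have e12: "1 + lam + a3 = (p1+p2)*(p1+p2) + (q1+q2)*(q1+q2)" using E[of "vector [1,1,0]"]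
    by (simp add: S p1_def q1_def p2_def q2_def algebra_simps)
  have e13: "1 + a0 + (a2-lam) = (p1+p3)*(p1+p3) + (q1+q3)*(q1+q3)" using E[of "vector [1,0,1]"]
    by (simp add: S p1_def q1_def p3_def q3_def algebra_simps)
  have e23: "lam + a0 + a1 = (p2+p3)*(p2+p3) + (q2+q3)*(q2+q3)" using E[of "vector [0,1,1]"]
    by (simp add: S p2_def q2_def p3_def q3_def algebra_simps)
  show "1 = p1*p1 + q1*q1" "lam = p2*p2+q2*q2" "a0 = p3*p3+q3*q3" by fact+
  show "a3/2 = p1*p2+q1*q2" using e1 e2 e12 by (simp add: algebra_simps)
  show "(a2-lam)/2 = p1*p3+q1*q3" using e1 e3 e13 by (simp add: algebra_simps)
  show "a1/2 = p2*p3+q2*q3" using e2 e3 e23 by (simp add: algebra_simps)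
qed

lemma rank_ge2:
  fixes M :: "real^3^3" and i :: 3
  assumes "i \<noteq> 1" "M$1$1 = 1" "M$i$1 = M$1$i" "M$i$i - (M$1$i)^2 \<noteq> 0"
  shows "rank M \<ge> 2"
proof -
  have r1: "row 1 M \<noteq> 0"
  proof
    assume "row 1 M = 0"
    then have "(row 1 M)$1 = 0" by simp
    then show False using assms(2) by (simp add: row_def)
  qed
  have ns: "row i M \<notin> span {row 1 M}"
  proof
    assume "row i M \<in> span {row 1 M}"
    then obtain k where k: "row i M = k *\<^sub>R row 1 M" by (auto simp: span_singleton)
    have a: "M$i$1 = k" using arg_cong[OF k, of "\<lambda>v. v$1"] assms(2) by (simp add: row_def)
    have b: "M$i$i = k * M$1$i" using arg_cong[OF k, of "\<lambda>v. v$i"] by (simp add: row_def)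
    show False using a b assms(3,4) by (simp add: power2_eq_square)
  qed
  have ind: "independent {row i M, row 1 M}"
    using ns r1 by (intro independent_insertI independent_empty) auto
  have ne: "row i M \<noteq> row 1 M" using ns span_base by blast
  have sub: "{row i M, row 1 M} \<subseteq> rows M" by (auto simp: rows_def)
  have "card {row i M, row 1 M} \<le> dim (rows M)" by (rule independent_card_le_dim[OF sub ind])
  then show ?thesis using ne by (simp add: row_rank_def)
qed

theorem lemma2:
  fixes a0 a1 a2 a3 lam :: real
  assumes "det (Mlam a0 a1 a2 a3 lam) = 0"
    and "cc_line_pair (Mlam a0 a1 a2 a3 lam)"
  shows "rank (Mlam a0 a1 a2 a3 lam) = 2 \<and> lam \<ge> a3^2 / 4"
proof -
  let ?M = "Mlam a0 a1 a2 a3 lam"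
  obtain l :: "complex^3" where np: "\<not> (\<exists>(c::complex) (r::real^3). \<forall>i. l$i = c * of_real (r$i))"
    and eq: "\<forall>x. cquad ?M x = lform l x * lform (\<chi> i. cnj (l$i)) x"
    using assms(2) unfolding cc_line_pair_def by blast
  define p1 where "p1 = Re (l$1)"
  define q1 where "q1 = Im (l$1)"
  define p2 where "p2 = Re (l$2)"
  define q2 where "q2 = Im (l$2)"
  define p3 where "p3 = Re (l$3)"
  define q3 where "q3 = Im (l$3)"
  note E = entries[OF eq, folded p1_def q1_def p2_def q2_def p3_def q3_def]
  have id2: "(p2*p2+q2*q2)*(p1*p1+q1*q1) - (p1*p2+q1*q2)^2 = (p1*q2-p2*q1)^2" by algebra
  have id3: "(p3*p3+q3*q3)*(p1*p1+q1*q1) - (p1*p3+q1*q3)^2 = (p1*q3-p3*q1)^2" by algebra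
  have m2: "lam - (a3/2)^2 = (p1*q2-p2*q1)^2"
    using id2 unfolding E(2)[symmetric] E(1)[symmetric] E(4)[symmetric] by simp
  have m3: "a0 - ((a2-lam)/2)^2 = (p1*q3-p3*q1)^2"
    using id3 unfolding E(3)[symmetric] E(1)[symmetric] E(5)[symmetric] by simp
  have lamge: "lam \<ge> a3^2/4" proof -
    have "lam - (a3/2)^2 \<ge> 0" unfolding m2 by simp
    then have "lam - a3^2/4 \<ge> 0" by (simp add: power_divide)
    then show ?thesis by linarith
  qed
  have nz: "p1*q2-p2*q1 \<noteq> 0 \<or> p1*q3-p3*q1 \<noteq> 0"
  proof (rule ccontr)
    assume "\<not> ?thesis"
    then have d2: "p1*q2 = p2*q1" and d3: "p1*q3 = p3*q1" by auto
    define r :: "real^3" where "r = (\<chi> k. Re (l$k) * p1 + Im (l$k) * q1)"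
    have "\<forall>i. l$i = Complex p1 q1 * of_real (r$i)"
    proof
      fix i :: 3
      have h1: "p1*(p*p1+q*q1) - p = p*(p1*p1+q1*q1 - 1) + q1*(p1*q - p*q1)"
        "q1*(p*p1+q*q1) - q = q*(p1*p1+q1*q1 - 1) - p1*(p1*q - p*q1)" for p q by algebra+
      have "p1*(p*p1+q*q1) = p \<and> q1*(p*p1+q*q1) = q" if "p1*q = p*q1" for p q
        using h1[of p q] that E(1)[symmetric] by auto
      note h = this
      have h': "Complex p q = Complex p1 q1 * of_real (p*p1+q*q1)" if "p1*q = p*q1" for p q
        using h[OF that] by (simp add: complex_eq_iff mult.commute)
      have L1: "l$1 = Complex p1 q1" "r$1 = p1*p1+q1*q1" by (simp_all add: p1_def q1_def r_def complex_eq_iff)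
      have L1': "r$1 = 1" using L1(2) E(1) by simp
      have L2: "l$2 = Complex p2 q2" "r$2 = p2*p1+q2*q1" by (simp_all add: p1_def q1_def p2_def q2_def r_def complex_eq_iff)
      have L3: "l$3 = Complex p3 q3" "r$3 = p3*p1+q3*q1" by (simp_all add: p1_def q1_def p3_def q3_def r_def complex_eq_iff)
      have "i = 1 \<or> i = 2 \<or> i = 3" using exhaust_3 by blast
      then show "l$i = Complex p1 q1 * of_real (r$i)"
      proof (elim disjE)
        assume "i = 1" then show ?thesis using L1(1) L1' by simp
      next
        assume "i = 2" then show ?thesis using L2 h'[OF d2] by simp
      next
        assume "i = 3" then show ?thesis using L3 h'[OF d3] by simp
      qed
    qed
    then show False using np by blast
  qed
  have rle: "rank ?M < 3" using assms(1) det_eq_0_rank[of ?M] by simp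
  have rge: "rank ?M \<ge> 2"
  proof (cases "p1*q2-p2*q1 \<noteq> 0")
    case True
    show ?thesis
      by (rule rank_ge2[of 2]) (use True m2 in \<open>simp_all add: Mlam_def vector_def\<close>)
  next
    case False
    then have "p1*q3-p3*q1 \<noteq> 0" using nz by blast
    then show ?thesis
      by (intro rank_ge2[of 3]) (use m3 in \<open>simp_all add: Mlam_def vector_def\<close>)
  qed
  show ?thesis using rle rge lamge by simp
qed

end
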